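(* Let $r$ be an integer with $\gcd(r,6)=1$, $0<r<24$, and $s$ an even nonnegative integer. Let $\mathcal S_{r,s}(1)$ be the space of holomorphic functions $g$ on the upper half-plane $\mathbb H$ satisfying $$g(\gamma\tau)=(c\tau+d)^s\frac{\eta(\gamma\tau)^r}{\eta(\tau)^r}\,g(\tau)\quad\text{for all }\gamma=\begin{pmatrix}a&b\\c&d\end{pmatrix}\in\mathrm{SL}(2,\mathbb Z),$$ which are holomorphic and vanish at the cusp. Then $$\mathcal S_{r,s}(1)=\{\eta(\tau)^rf(\tau):\ f\in M_s(1)\},$$ where $M_s(1)$ is the space of modular forms of weight $s$ on $\mathrm{SL}(2,\mathbb Z)$.
   Context: $\eta(\tau)=e^{2\pi i\tau/24}\prod_{m\ge1}(1-e^{2\pi im\tau})$ is the Dedekind eta function; for $\gamma\in\mathrm{SL}(2,\mathbb Z)$, $\eta(\gamma\tau)^r/\eta(\tau)^r$ means $(\eta(\gamma\tau)/\eta(\tau))^r$, a holomorphic function of $\tau$. *)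

theory Defs
  imports "HOL-Complex_Analysis.Complex_Analysis"
begin

definition uhp :: "complex set" where
  "uhp = {\<tau>. Im \<tau> > 0}"

definition dedekind_eta :: "complex \<Rightarrow> complex" where
  "dedekind_eta \<tau> = exp (2 * pi * \<i> * \<tau> / 24) *
     (\<Prod>m. (1 - exp (2 * pi * \<i> * of_nat (Suc m) * \<tau>)))"

definition moebius :: "int \<Rightarrow> int \<Rightarrow> int \<Rightarrow> int \<Rightarrow> complex \<Rightarrow> complex" where
  "moebius a b c d \<tau> = (of_int a * \<tau> + of_int b) / (of_int c * \<tau> + of_int d)"

definition holomorphic_at_cusp :: "(complex \<Rightarrow> complex) \<Rightarrow> bool" where
  "holomorphic_at_cusp f \<longleftrightarrow> (\<exists>M Y. \<forall>\<tau>. Im \<tau> > Y \<longrightarrow> norm (f \<tau>) \<le> M)"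

definition vanishes_at_cusp :: "(complex \<Rightarrow> complex) \<Rightarrow> bool" where
  "vanishes_at_cusp f \<longleftrightarrow> (\<forall>\<epsilon>>0. \<exists>Y. \<forall>\<tau>. Im \<tau> > Y \<longrightarrow> norm (f \<tau>) < \<epsilon>)"

definition modular_form :: "nat \<Rightarrow> (complex \<Rightarrow> complex) \<Rightarrow> bool" where
  "modular_form s f \<longleftrightarrow>
     f holomorphic_on uhp \<and>
     (\<forall>a b c d. a * d - b * c = 1 \<longrightarrow>
        (\<forall>\<tau>\<in>uhp. f (moebius a b c d \<tau>) = (of_int c * \<tau> + of_int d) ^ s * f \<tau>)) \<and>
     holomorphic_at_cusp f"

definition eta_cusp_form :: "nat \<Rightarrow> nat \<Rightarrow> (complex \<Rightarrow> complex) \<Rightarrow> bool" where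
  "eta_cusp_form r s g \<longleftrightarrow>
     g holomorphic_on uhp \<and>
     (\<forall>a b c d. a * d - b * c = 1 \<longrightarrow>
        (\<forall>\<tau>\<in>uhp. g (moebius a b c d \<tau>) =
            (of_int c * \<tau> + of_int d) ^ s *
            (dedekind_eta (moebius a b c d \<tau>) / dedekind_eta \<tau>) ^ r * g \<tau>)) \<and>
     holomorphic_at_cusp g \<and> vanishes_at_cusp g"

end

theory Submission
  imports Defs
begin

definition Pq :: "complex \<Rightarrow> complex" where
  "Pq w = (\<Prod>m. (1 - w ^ Suc m))"

lemma Pq_conv:
  fixes w :: complex
  assumes "norm w < 1"
  shows "convergent_prod (\<lambda>m. 1 - w ^ Suc m)"
proof -
  have "summable (\<lambda>m. norm w ^ Suc m)"
    using assms by (simp add: summable_geometric)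
  moreover have "norm ((1 - w ^ Suc m) - 1) = norm w ^ Suc m" for m
    by (simp add: norm_power del: power_Suc)
  ultimately have "summable (\<lambda>m. norm ((1 - w ^ Suc m) - 1))"
    by simp
  hence "abs_convergent_prod (\<lambda>m. 1 - w ^ Suc m)"
    by (rule summable_imp_abs_convergent_prod)
  thus ?thesis by (rule abs_convergent_prod_imp_convergent_prod)
qed

lemma Pq_factor_nz:
  fixes w :: complex
  assumes "norm w < 1"
  shows "1 - w ^ Suc m \<noteq> 0"
proof
  assume "1 - w ^ Suc m = 0"
  hence "w ^ Suc m = 1" by (metis eq_iff_diff_eq_0)
  hence "norm (w ^ Suc m) = 1" by (metis norm_one)
  moreover have "norm w ^ Suc m < 1"
    using assms by (simp add: power_less_one_iff del: power_Suc)
  ultimately show False by (simp add: norm_power del: power_Suc)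
qed

lemma Pq_nz:
  assumes "norm w < 1"
  shows "Pq w \<noteq> 0"
  unfolding Pq_def using Pq_conv[OF assms] Pq_factor_nz[OF assms]
  by (rule prodinf_nonzero)

lemma Pq_unif:
  assumes "0 < R" "R < 1"
  shows "uniform_limit (cball (0::complex) R) (\<lambda>N w. \<Prod>m<N. (1 - w ^ Suc m)) Pq sequentially"
proof -
  have "uniformly_convergent_on (cball (0::complex) R) (\<lambda>N w. \<Prod>m<N. (1 - w ^ Suc m))"
  proof (rule uniformly_convergent_on_prod'[where f="\<lambda>m w. 1 - w ^ Suc m"])
    show "uniformly_convergent_on (cball (0::complex) R) (\<lambda>N x. \<Sum>n<N. norm ((1 - x ^ Suc n) - 1))"
    proof (rule Weierstrass_m_test'_ev)
      show "\<forall>\<^sub>F n in sequentially. \<forall>x\<in>cball (0::complex) R. norm (norm ((1 - x ^ Suc n) - 1)) \<le> R ^ Suc n"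
        by (intro always_eventually allI ballI) (auto simp: norm_power simp del: power_Suc intro!: power_mono)
      show "summable (\<lambda>n. R ^ Suc n)"
        using assms by (simp add: summable_geometric)
    qed
  qed (auto intro!: continuous_intros)
  then obtain g where g: "uniform_limit (cball (0::complex) R) (\<lambda>N w. \<Prod>m<N. (1 - w ^ Suc m)) g sequentially"
    by (auto simp: uniformly_convergent_on_def)
  also have "?this \<longleftrightarrow> uniform_limit (cball (0::complex) R) (\<lambda>N w. \<Prod>m<N. (1 - w ^ Suc m)) Pq sequentially"
  proof (intro uniform_limit_cong)
    fix z :: complex assume z: "z \<in> cball (0::complex) R"
    hence nz: "norm z < 1" using assms by auto
    have "(\<lambda>n. \<Prod>m<n. (1 - z ^ Suc m)) \<longlonglongrightarrow> g z"
      by (rule tendsto_uniform_limitI[OF g z])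
    hence "(\<lambda>n. \<Prod>m<Suc n. (1 - z ^ Suc m)) \<longlonglongrightarrow> g z"
      by (rule LIMSEQ_Suc)
    moreover have "(\<lambda>n. \<Prod>m<Suc n. (1 - z ^ Suc m)) \<longlonglongrightarrow> Pq z"
      using convergent_prod_LIMSEQ[OF Pq_conv[OF nz]] unfolding lessThan_Suc_atMost
      by (simp add: Pq_def)
    ultimately show "g z = Pq z"
      by (rule LIMSEQ_unique)
  qed auto
  finally show ?thesis .
qed

lemma Pq_holo: "Pq holomorphic_on ball 0 1"
proof (rule holomorphic_uniform_sequence)
  fix z :: complex assume z: "z \<in> ball 0 1"
  define d where "d = (1 - norm z) / 2"
  have d: "d > 0" using z by (simp add: d_def)
  define R where "R = norm z + d"
  have nz: "norm z < 1" using z by simp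
  have R1: "0 < R" using nz d norm_ge_zero[of z] unfolding R_def d_def by linarith
  have R2: "R < 1" using nz unfolding R_def d_def by (auto simp: field_simps)
  note R = R1 R2
  have sub: "cball z d \<subseteq> cball (0::complex) R"
  proof
    fix x assume "x \<in> cball z d"
    hence "norm (x - z) \<le> d" by (simp add: dist_norm norm_minus_commute)
    moreover have "norm x \<le> norm z + norm (x - z)" using norm_triangle_ineq[of z "x - z"] by simp
    ultimately show "x \<in> cball (0::complex) R" by (simp add: R_def)
  qed
  have "uniform_limit (cball z d) (\<lambda>N w. \<Prod>m<N. (1 - w ^ Suc m)) Pq sequentially"
    by (rule uniform_limit_on_subset[OF Pq_unif[OF R] sub])
  moreover have "cball z d \<subseteq> ball 0 1"
    using sub R by auto
  ultimately show "\<exists>d>0. cball z d \<subseteq> ball 0 1 \<and> uniform_limit (cball z d) (\<lambda>N w. \<Prod>m<N. (1 - w ^ Suc m)) Pq sequentially"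
    using d by blast
qed (auto intro!: holomorphic_intros)

lemma Pq_0: "Pq 0 = 1"
  by (simp add: Pq_def)

definition qq :: "complex \<Rightarrow> complex" where
  "qq \<tau> = exp (2 * pi * \<i> * \<tau>)"

lemma norm_qq: "norm (qq \<tau>) = exp (- 2 * pi * Im \<tau>)"
  by (simp add: qq_def)

lemma norm_qq_lt1: "\<tau> \<in> uhp \<Longrightarrow> norm (qq \<tau>) < 1"
  by (simp add: norm_qq uhp_def)

lemma eta_eq: "dedekind_eta \<tau> = exp (2 * pi * \<i> * \<tau> / 24) * Pq (qq \<tau>)"
proof -
  have "exp (2 * pi * \<i> * of_nat (Suc m) * \<tau>) = qq \<tau> ^ Suc m" for m
  proof -
    have "2 * pi * \<i> * of_nat (Suc m) * \<tau> = of_nat (Suc m) * (2 * pi * \<i> * \<tau>)"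
      by (simp add: algebra_simps)
    thus ?thesis by (simp only: exp_of_nat_mult qq_def)
  qed
  thus ?thesis by (simp add: dedekind_eta_def Pq_def del: power_Suc of_nat_Suc)
qed

lemma eta_nz: "\<tau> \<in> uhp \<Longrightarrow> dedekind_eta \<tau> \<noteq> 0"
  using Pq_nz[OF norm_qq_lt1] by (simp add: eta_eq)

lemma qq_holo: "qq holomorphic_on A"
  unfolding qq_def by (intro holomorphic_intros)

lemma eta_holo: "dedekind_eta holomorphic_on uhp"
proof -
  have "(Pq \<circ> qq) holomorphic_on uhp"
    by (rule holomorphic_on_compose_gen[OF qq_holo Pq_holo]) (auto dest: norm_qq_lt1)
  hence "(\<lambda>\<tau>. exp (2 * pi * \<i> * \<tau> / 24) * (Pq \<circ> qq) \<tau>) holomorphic_on uhp"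
    by (intro holomorphic_intros) (auto simp: o_def)
  thus ?thesis by (simp add: eta_eq[abs_def] o_def)
qed

lemma qq_plus_int: "qq (\<tau> + of_int n) = qq \<tau>"
proof -
  have "2 * pi * \<i> * (\<tau> + of_int n) = 2 * pi * \<i> * \<tau> + (2 * of_int n * pi) * \<i>"
    by (simp add: algebra_simps)
  moreover have "exp ((2 * of_int n * pi) * \<i>) = 1"
    by (rule exp_integer_2pi) simp
  ultimately show ?thesis by (simp add: qq_def exp_add)
qed

lemma eta_plus_int: "dedekind_eta (\<tau> + of_int n) = exp (2 * pi * \<i> * of_int n / 24) * dedekind_eta \<tau>"
  by (simp add: eta_eq qq_plus_int distrib_left add_divide_distrib exp_add)

lemma moebius_translate: "moebius 1 n 0 1 \<tau> = \<tau> + of_int n"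
  by (simp add: moebius_def)

lemma moebius_uhp:
  assumes "a * d - b * c = 1" "\<tau> \<in> uhp"
  shows "moebius a b c d \<tau> \<in> uhp"
proof -
  let ?y = "Im \<tau>" and ?x = "Re \<tau>"
  have y: "?y > 0" using assms(2) by (simp add: uhp_def)
  have nz: "of_int c * \<tau> + of_int d \<noteq> 0"
  proof
    assume h: "of_int c * \<tau> + of_int d = 0"
    hence "Im (of_int c * \<tau> + of_int d) = 0" by simp
    hence "c = 0" using y by simp
    with h have "d = 0" by simp
    with \<open>c = 0\<close> assms(1) show False by simp
  qed
  have "Im (moebius a b c d \<tau>) = (of_int a * ?y * (of_int c * ?x + of_int d) - (of_int a * ?x + of_int b) * (of_int c * ?y)) / (norm (of_int c * \<tau> + of_int d))\<^sup>2"
    by (simp add: moebius_def Im_divide')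
  also have "(of_int a * ?y * (of_int c * ?x + of_int d) - (of_int a * ?x + of_int b) * (of_int c * ?y)) = of_int (a * d - b * c) * ?y"
    by (simp add: algebra_simps)
  also have "\<dots> = ?y" using assms(1) by simp
  finally have "Im (moebius a b c d \<tau>) = ?y / (norm (of_int c * \<tau> + of_int d))\<^sup>2" .
  moreover have "(norm (of_int c * \<tau> + of_int d))\<^sup>2 > 0" using nz by simp
  ultimately show ?thesis using y by (simp add: uhp_def)
qed

lemma Pq_near0: "\<exists>\<delta>>0. \<forall>w. norm w < \<delta> \<longrightarrow> norm (Pq w - 1) < 1/2"
proof -
  have "continuous (at 0) Pq"
    by (rule continuous_on_interior[OF holomorphic_on_imp_continuous_on[OF Pq_holo]]) simp
  then obtain d where "d > 0" "\<forall>x'. dist x' 0 < d \<longrightarrow> dist (Pq x') (Pq 0) < 1/2"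
    unfolding continuous_at_eps_delta by (meson divide_pos_pos zero_less_numeral zero_less_one)
  thus ?thesis by (auto simp: Pq_0 dist_norm)
qed

lemma exp_neg_le: "(t::real) > 0 \<Longrightarrow> exp (- t) \<le> 1 / t"
proof -
  assume t: "t > 0"
  have "1 + t \<le> exp t" by (rule exp_ge_add_one_self)
  hence "t \<le> exp t" by linarith
  hence "1 / exp t \<le> 1 / t" using t by (intro divide_left_mono) auto
  thus ?thesis by (simp add: exp_minus field_simps)
qed

lemma Pq_bounds_cusp:
  "\<exists>Y>0. \<forall>\<tau>. Im \<tau> > Y \<longrightarrow> 1/2 \<le> norm (Pq (qq \<tau>)) \<and> norm (Pq (qq \<tau>)) \<le> 3/2 \<and> norm (qq \<tau>) < 1"
proof -
  obtain \<delta> where d: "\<delta> > 0" "\<And>w. norm w < \<delta> \<Longrightarrow> norm (Pq w - 1) < 1/2"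
    using Pq_near0 by blast
  define Y where "Y = 1 / (2 * pi * \<delta>)"
  have Y: "Y > 0" using d by (simp add: Y_def)
  have "1/2 \<le> norm (Pq (qq \<tau>)) \<and> norm (Pq (qq \<tau>)) \<le> 3/2 \<and> norm (qq \<tau>) < 1" if t: "Im \<tau> > Y" for \<tau>
  proof -
    have pos: "2 * pi * Im \<tau> > 0" using t Y by simp
    have "norm (qq \<tau>) = exp (- (2 * pi * Im \<tau>))" by (simp add: norm_qq)
    also have "\<dots> \<le> 1 / (2 * pi * Im \<tau>)" by (rule exp_neg_le[OF pos])
    also have "\<dots> < \<delta>"
    proof -
      have "2 * pi * Y * \<delta> = 1" using d by (simp add: Y_def)
      moreover have "2 * pi * Y * \<delta> < 2 * pi * Im \<tau> * \<delta>" using t d by simp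
      ultimately have "1 < 2 * pi * Im \<tau> * \<delta>" by simp
      thus ?thesis using pos by (simp add: field_simps)
    qed
    finally have "norm (Pq (qq \<tau>) - 1) < 1/2" by (rule d(2))
    moreover have "norm (qq \<tau>) < 1" using t Y by (simp add: norm_qq)
    ultimately show ?thesis
      using norm_triangle_ineq2[of "Pq (qq \<tau>)" 1] norm_triangle_ineq2[of 1 "Pq (qq \<tau>)"] norm_minus_commute[of 1 "Pq (qq \<tau>)"] norm_triangle_ineq[of "Pq (qq \<tau>) - 1" 1]
      by auto
  qed
  thus ?thesis using Y by blast
qed

lemma qq_small:
  assumes "\<delta> > 0"
  shows "\<exists>Y>0. \<forall>\<tau>. Im \<tau> > Y \<longrightarrow> norm (qq \<tau>) < \<delta>"
proof -
  define Y where "Y = 1 / (2 * pi * \<delta>)"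
  have Y: "Y > 0" using assms by (simp add: Y_def)
  have "norm (qq \<tau>) < \<delta>" if t: "Im \<tau> > Y" for \<tau>
  proof -
    have pos: "2 * pi * Im \<tau> > 0" using t Y by simp
    have "norm (qq \<tau>) = exp (- (2 * pi * Im \<tau>))" by (simp add: norm_qq)
    also have "\<dots> \<le> 1 / (2 * pi * Im \<tau>)" by (rule exp_neg_le[OF pos])
    also have "\<dots> < \<delta>"
    proof -
      have "2 * pi * Y * \<delta> = 1" using assms by (simp add: Y_def)
      moreover have "2 * pi * Y * \<delta> < 2 * pi * Im \<tau> * \<delta>" using t assms by simp
      ultimately have "1 < 2 * pi * Im \<tau> * \<delta>" by simp
      thus ?thesis using pos by (simp add: field_simps)
    qed
    finally show ?thesis .
  qed
  thus ?thesis using Y by blast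
qed

lemma Im_div_2pii: "Im (z / (2 * pi * \<i>)) = - Re z / (2 * pi)"
  by (simp add: Im_divide field_simps power2_eq_square)

lemma log_uhp:
  assumes "exp L = w" "norm w < 1"
  shows "L / (2 * pi * \<i>) \<in> uhp"
proof -
  have "exp (Re L) = norm w" using assms(1) by auto
  hence "exp (Re L) < 1" using assms(2) by simp
  hence "Re L < 0" by simp
  thus ?thesis unfolding uhp_def mem_Collect_eq Im_div_2pii by (simp add: field_simps)
qed

lemma open_negs: "open {w::complex. - w \<notin> \<real>\<^sub>\<le>\<^sub>0}"
proof -
  have "{w::complex. - w \<notin> \<real>\<^sub>\<le>\<^sub>0} = (\<lambda>x. - x) ` (- \<real>\<^sub>\<le>\<^sub>0)"
    apply (auto simp: image_iff)
    apply (rule_tac x="-x" in bexI)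
     apply auto
    done
  moreover have "open ((\<lambda>x. - x) ` (- (\<real>\<^sub>\<le>\<^sub>0 :: complex set)))"
    by (rule open_negations) auto
  ultimately show ?thesis by simp
qed

lemma cusp_F_bounded:
  fixes g :: "complex \<Rightarrow> complex" and r :: nat
  assumes holo: "g holomorphic_on uhp"
    and per: "\<And>\<tau> n. \<tau> \<in> uhp \<Longrightarrow> g (\<tau> + of_int n) = exp (2 * pi * \<i> * of_int n / 24) ^ r * g \<tau>"
    and bnd: "holomorphic_at_cusp g"
    and r: "r < 24"
  shows "\<exists>B Y. \<forall>\<tau>. Im \<tau> > Y \<longrightarrow> norm (g \<tau> / exp (2 * pi * \<i> * \<tau> / 24) ^ r) \<le> B"
proof -
  define F where "F = (\<lambda>\<tau>. g \<tau> / exp (2 * pi * \<i> * \<tau> / 24) ^ r)"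
  have Fper: "F (\<tau> + of_int n) = F \<tau>" if "\<tau> \<in> uhp" for \<tau> n
  proof -
    have e: "exp (2 * pi * \<i> * (\<tau> + of_int n) / 24) = exp (2 * pi * \<i> * \<tau> / 24) * exp (2 * pi * \<i> * of_int n / 24)"
      by (simp add: distrib_left add_divide_distrib exp_add)
    show ?thesis unfolding F_def e per[OF that]
      by (simp add: power_mult_distrib)
  qed
  have Fholo: "F holomorphic_on uhp"
    unfolding F_def by (intro holomorphic_intros holo) auto
  define G where "G = (\<lambda>w. F (Ln w / (2 * pi * \<i>)))"
  have G_any: "G w = F (L / (2 * pi * \<i>))" if "exp L = w" "w \<noteq> 0" "norm w < 1" for L w
  proof -
    have "exp L = exp (Ln w)" using that by simp
    then obtain n :: int where n: "L = Ln w + of_int (2 * n) * pi * \<i>"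
      unfolding exp_eq by blast
    have "L / (2 * pi * \<i>) = Ln w / (2 * pi * \<i>) + of_int n"
      unfolding n by (simp add: field_simps)
    moreover have "Ln w / (2 * pi * \<i>) \<in> uhp"
      by (rule log_uhp) (use that in auto)
    ultimately show ?thesis by (simp add: G_def Fper)
  qed
  have Gholo: "G holomorphic_on ball 0 1 - {0}"
  proof -
    have "\<exists>f'. DERIV G w0 :> f'" if w0: "w0 \<in> ball 0 1 - {0}" for w0
    proof (cases "w0 \<in> \<real>\<^sub>\<le>\<^sub>0")
      case False
      define U where "U = ball (0::complex) 1 - \<real>\<^sub>\<le>\<^sub>0"
      have U: "open U" "w0 \<in> U" using False w0 by (auto simp: U_def)
      have "(F \<circ> (\<lambda>w. Ln w / (2 * pi * \<i>))) holomorphic_on U"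
      proof (rule holomorphic_on_compose_gen[OF _ Fholo])
        show "(\<lambda>w. Ln w / (2 * pi * \<i>)) holomorphic_on U"
          by (intro holomorphic_intros) (auto simp: U_def)
        show "(\<lambda>w. Ln w / (2 * pi * \<i>)) ` U \<subseteq> uhp"
        proof
          fix x assume "x \<in> (\<lambda>w. Ln w / (2 * pi * \<i>)) ` U"
          then obtain w where w: "w \<in> U" "x = Ln w / (2 * pi * \<i>)" by blast
          have "w \<noteq> 0" using \<open>w \<in> U\<close> by (auto simp: U_def)
          show "x \<in> uhp" unfolding w(2) by (rule log_uhp[of "Ln w" w]) (use w(1) \<open>w \<noteq> 0\<close> in \<open>auto simp: U_def\<close>)
        qed
      qed
      hence "G holomorphic_on U" by (simp add: G_def o_def)
      thus ?thesis using U holomorphic_on_open by blast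
    next
      case True
      define U where "U = ball (0::complex) 1 \<inter> {w. - w \<notin> \<real>\<^sub>\<le>\<^sub>0}"
      have w0ne: "- w0 \<notin> \<real>\<^sub>\<le>\<^sub>0"
        using True w0 by (auto simp: complex_nonpos_Reals_iff complex_eq_iff)
      have U: "open U" "w0 \<in> U" using w0ne w0 open_negs by (auto simp: U_def)
      define H where "H = (\<lambda>w. F ((Ln (- w) + pi * \<i>) / (2 * pi * \<i>)))"
      have expL: "exp (Ln (- w) + pi * \<i>) = w" if "w \<noteq> 0" for w
        using that by (simp add: exp_add)
      have Unz: "w \<noteq> 0" if "w \<in> U" for w using that by (auto simp: U_def)
      have "(F \<circ> (\<lambda>w. (Ln (- w) + pi * \<i>) / (2 * pi * \<i>))) holomorphic_on U"
      proof (rule holomorphic_on_compose_gen[OF _ Fholo])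
        show "(\<lambda>w. (Ln (- w) + pi * \<i>) / (2 * pi * \<i>)) holomorphic_on U"
          by (intro holomorphic_intros) (auto simp: U_def)
        show "(\<lambda>w. (Ln (- w) + pi * \<i>) / (2 * pi * \<i>)) ` U \<subseteq> uhp"
        proof
          fix x assume "x \<in> (\<lambda>w. (Ln (- w) + pi * \<i>) / (2 * pi * \<i>)) ` U"
          then obtain w where w: "w \<in> U" "x = (Ln (- w) + pi * \<i>) / (2 * pi * \<i>)" by blast
          show "x \<in> uhp" unfolding w(2)
            by (rule log_uhp[OF expL[OF Unz[OF w(1)]]]) (use w(1) in \<open>auto simp: U_def\<close>)
        qed
      qed
      hence "H holomorphic_on U" by (simp add: H_def o_def)
      then obtain f' where "DERIV H w0 :> f'" using U holomorphic_on_open by blast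
      moreover have "H w = G w" if "w \<in> U" for w
        unfolding H_def using G_any[OF expL[OF Unz[OF that]] Unz[OF that]] that
        by (simp add: U_def)
      ultimately have "DERIV G w0 :> f'"
        using has_field_derivative_transform_within_open[of H f' w0 U G] U by blast
      thus ?thesis by blast
    qed
    thus ?thesis by (subst holomorphic_on_open) auto
  qed
  obtain M Y where MY: "\<And>\<tau>. Im \<tau> > Y \<Longrightarrow> norm (g \<tau>) \<le> M"
    using bnd unfolding holomorphic_at_cusp_def by blast
  define M' where "M' = max M 0"
  define Y' where "Y' = max Y 0"
  define e where "e = 1 - real r / 24"
  have e: "e > 0" using r by (simp add: e_def)
  have ev: "eventually (\<lambda>z. norm ((z - 0) * G z) \<le> M' * norm z powr e) (at (0::complex))"
    unfolding eventually_at
  proof (intro exI[of _ "exp (- 2 * pi * Y')"] conjI ballI impI allI)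
    show "exp (- 2 * pi * Y') > 0" by simp
    fix w :: complex assume w: "w \<noteq> 0 \<and> dist w 0 < exp (- 2 * pi * Y')"
    have wn: "norm w < exp (- 2 * pi * Y')" using w by simp
    have "exp (- 2 * pi * Y') \<le> 1" by (simp add: Y'_def)
    hence w1: "norm w < 1" using wn by linarith
    define \<tau> where "\<tau> = Ln w / (2 * pi * \<i>)"
    define l where "l = ln (norm w)"
    have wl: "norm w = exp l" using w by (simp add: l_def)
    have "exp l < exp (- 2 * pi * Y')" using wn wl by simp
    hence lY: "l < - 2 * pi * Y'" by simp
    have Imt: "Im \<tau> = - l / (2 * pi)" unfolding \<tau>_def Im_div_2pii using w by (simp add: l_def)
    have "Im \<tau> > Y'"
    proof -
      have "- l > 2 * pi * Y'" using lY by simp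
      hence "- l / (2 * pi) > Y'" by (simp add: field_simps)
      thus ?thesis using Imt by simp
    qed
    hence gb: "norm (g \<tau>) \<le> M'" using MY[of \<tau>] by (simp add: Y'_def M'_def)
    have "2 * pi * \<i> * \<tau> / 24 = Ln w / 24" by (simp add: \<tau>_def field_simps)
    hence Gw: "G w = g \<tau> / exp (Ln w / 24) ^ r" by (simp add: G_def F_def \<tau>_def)
    have ne: "norm (exp (Ln w / 24)) = exp (l / 24)" using w by (simp add: l_def)
    have "norm ((w - 0) * G w) = norm (g \<tau>) * (exp l / exp (l / 24) ^ r)"
      using wl w by (simp add: Gw norm_mult norm_divide norm_power ne l_def)
    also have "exp l / exp (l / 24) ^ r = exp (e * l)"
    proof -
      have "exp (l / 24) ^ r = exp (real r * (l / 24))" by (simp only: exp_of_nat_mult)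
      hence "exp l / exp (l / 24) ^ r = exp (l - real r * (l / 24))" by (simp add: exp_diff)
      also have "l - real r * (l / 24) = e * l" by (simp add: e_def algebra_simps)
      finally show ?thesis .
    qed
    also have "exp (e * l) = norm w powr e" using w by (simp add: powr_def l_def)
    finally show "norm ((w - 0) * G w) \<le> M' * norm w powr e"
      using gb by (simp add: mult_right_mono)
  qed
  have "((\<lambda>z. M' * norm z powr e) \<longlongrightarrow> 0) (at (0::complex))"
  proof -
    have "((\<lambda>z::complex. norm z) \<longlongrightarrow> 0) (at 0)"
      by (rule tendsto_norm_zero[OF tendsto_ident_at])
    hence pw: "((\<lambda>z::complex. norm z powr e) \<longlongrightarrow> 0) (at 0)"
      by (rule tendsto_zero_powrI) (use e in auto)
    show ?thesis using tendsto_mult[OF tendsto_const pw, of M'] by simp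
  qed
  with ev have lim: "((\<lambda>z. (z - 0) * G z) \<longlongrightarrow> 0) (at 0)"
    by (rule Lim_null_comparison)
  have int0: "(0::complex) \<in> interior (ball 0 1)" by simp
  obtain G' where G': "G' holomorphic_on ball 0 1" "\<And>z. z \<in> ball 0 1 - {0} \<Longrightarrow> G' z = G z"
    using holomorphic_on_extend_lim[OF Gholo int0] lim by auto
  have "continuous (at 0) G'"
    by (rule continuous_on_interior[OF holomorphic_on_imp_continuous_on[OF G'(1)]]) simp
  then obtain d where d: "d > 0" "\<And>x'. dist x' 0 < d \<Longrightarrow> dist (G' x') (G' 0) < 1"
    unfolding continuous_at_eps_delta by (meson zero_less_one)
  obtain Y0 where Y0: "Y0 > 0" "\<And>\<tau>. Im \<tau> > Y0 \<Longrightarrow> norm (qq \<tau>) < min d 1"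
    using qq_small[of "min d 1"] d(1) by auto
  have "norm (F \<tau>) \<le> norm (G' 0) + 1" if t: "Im \<tau> > Y0" for \<tau>
  proof -
    have q: "norm (qq \<tau>) < d" "norm (qq \<tau>) < 1" using Y0(2)[OF t] by auto
    have qnz: "qq \<tau> \<noteq> 0" by (simp add: qq_def)
    have "G (qq \<tau>) = F (2 * pi * \<i> * \<tau> / (2 * pi * \<i>))"
      by (rule G_any) (use q qnz in \<open>auto simp: qq_def\<close>)
    hence "F \<tau> = G (qq \<tau>)" by simp
    also have "\<dots> = G' (qq \<tau>)" using G'(2)[of "qq \<tau>"] q qnz by simp
    finally have "F \<tau> = G' (qq \<tau>)" .
    moreover have "dist (G' (qq \<tau>)) (G' 0) < 1" using d(2)[of "qq \<tau>"] q by simp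
    ultimately show ?thesis
      using norm_triangle_ineq2[of "G' (qq \<tau>)" "G' 0"] by (simp add: dist_norm)
  qed
  thus ?thesis unfolding F_def by blast
qed

lemma norm_eta: "norm (dedekind_eta \<tau>) = exp (- 2 * pi * Im \<tau> / 24) * norm (Pq (qq \<tau>))"
  by (simp add: eta_eq norm_mult)

lemma backward:
  fixes r s :: nat
  assumes f: "modular_form s f" and gf: "\<forall>\<tau>\<in>uhp. g \<tau> = dedekind_eta \<tau> ^ r * f \<tau>" and r: "0 < r"
  shows "eta_cusp_form r s g"
proof -
  have fh: "f holomorphic_on uhp"
    and ftr: "\<And>a b c d \<tau>. a * d - b * c = 1 \<Longrightarrow> \<tau> \<in> uhp \<Longrightarrow>
        f (moebius a b c d \<tau>) = (of_int c * \<tau> + of_int d) ^ s * f \<tau>"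
    and fc: "holomorphic_at_cusp f"
    using f unfolding modular_form_def by blast+
  have gh: "g holomorphic_on uhp"
  proof (rule holomorphic_transform)
    show "(\<lambda>\<tau>. dedekind_eta \<tau> ^ r * f \<tau>) holomorphic_on uhp"
      by (intro holomorphic_intros eta_holo fh)
  qed (use gf in auto)
  have gtr: "g (moebius a b c d \<tau>) = (of_int c * \<tau> + of_int d) ^ s *
            (dedekind_eta (moebius a b c d \<tau>) / dedekind_eta \<tau>) ^ r * g \<tau>"
    if det: "a * d - b * c = 1" and t: "\<tau> \<in> uhp" for a b c d \<tau>
  proof -
    have m: "moebius a b c d \<tau> \<in> uhp" by (rule moebius_uhp[OF det t])
    have nz: "dedekind_eta \<tau> \<noteq> 0" by (rule eta_nz[OF t])
    have "g (moebius a b c d \<tau>) = dedekind_eta (moebius a b c d \<tau>) ^ r * ((of_int c * \<tau> + of_int d) ^ s * f \<tau>)"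
      using gf m ftr[OF det t] by simp
    also have "\<dots> = (of_int c * \<tau> + of_int d) ^ s *
            (dedekind_eta (moebius a b c d \<tau>) / dedekind_eta \<tau>) ^ r * (dedekind_eta \<tau> ^ r * f \<tau>)"
      using nz by (simp add: power_divide field_simps)
    also have "\<dots> = (of_int c * \<tau> + of_int d) ^ s *
            (dedekind_eta (moebius a b c d \<tau>) / dedekind_eta \<tau>) ^ r * g \<tau>"
      using gf t by simp
    finally show ?thesis .
  qed
  obtain M Y where MY: "\<And>\<tau>. Im \<tau> > Y \<Longrightarrow> norm (f \<tau>) \<le> M"
    using fc unfolding holomorphic_at_cusp_def by blast
  obtain Y0 where Y0: "Y0 > 0" "\<And>\<tau>. Im \<tau> > Y0 \<Longrightarrow> 1/2 \<le> norm (Pq (qq \<tau>)) \<and> norm (Pq (qq \<tau>)) \<le> 3/2 \<and> norm (qq \<tau>) < 1"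
    using Pq_bounds_cusp by blast
  define K where "K = (3/2) ^ r * (max M 0 + 1)"
  have K: "K > 0" by (simp add: K_def)
  have gb: "norm (g \<tau>) \<le> K * exp (- 2 * pi * Im \<tau> / 24)" if t: "Im \<tau> > max Y Y0" for \<tau>
  proof -
    have tu: "\<tau> \<in> uhp" using t Y0(1) by (simp add: uhp_def)
    define E where "E = exp (- 2 * pi * Im \<tau> / 24)"
    have E: "0 < E" "E \<le> 1" using t Y0(1) by (auto simp: E_def)
    have P: "norm (Pq (qq \<tau>)) \<le> 3/2" using Y0(2)[of \<tau>] t by simp
    have "norm (g \<tau>) = norm (dedekind_eta \<tau>) ^ r * norm (f \<tau>)"
      using gf tu by (simp add: norm_mult norm_power)
    also have "norm (dedekind_eta \<tau>) ^ r = E ^ r * norm (Pq (qq \<tau>)) ^ r"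
      by (simp add: norm_eta E_def power_mult_distrib)
    also have "E ^ r * norm (Pq (qq \<tau>)) ^ r * norm (f \<tau>) \<le> E * (3/2) ^ r * max M 0"
    proof (intro mult_mono)
      show "E ^ r \<le> E" using power_decreasing[of 1 r E] E r by simp
      show "norm (Pq (qq \<tau>)) ^ r \<le> (3/2) ^ r" by (rule power_mono[OF P]) simp
      show "norm (f \<tau>) \<le> max M 0" using MY[of \<tau>] t by simp
    qed (use E in auto)
    also have "\<dots> \<le> K * E" using E by (simp add: K_def mult_left_mono)
    finally show ?thesis by (simp add: E_def)
  qed
  have hc: "holomorphic_at_cusp g"
    unfolding holomorphic_at_cusp_def
  proof (intro exI allI impI)
    fix \<tau> :: complex assume t: "Im \<tau> > max Y Y0"
    have "exp (- 2 * pi * Im \<tau> / 24) \<le> 1" using t Y0(1) by simp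
    hence "K * exp (- 2 * pi * Im \<tau> / 24) \<le> K" using K by (simp add: mult_left_le)
    thus "norm (g \<tau>) \<le> K" using gb[OF t] by linarith
  qed
  have vc: "vanishes_at_cusp g"
    unfolding vanishes_at_cusp_def
  proof (intro allI impI)
    fix \<epsilon> :: real assume eps: "\<epsilon> > 0"
    define Y' where "Y' = max (max Y Y0) (12 * K / (pi * \<epsilon>))"
    have "norm (g \<tau>) < \<epsilon>" if t: "Im \<tau> > Y'" for \<tau>
    proof -
      have t1: "Im \<tau> > max Y Y0" using t by (simp add: Y'_def)
      have t2: "Im \<tau> > 12 * K / (pi * \<epsilon>)" using t by (simp add: Y'_def)
      have pos: "2 * pi * Im \<tau> / 24 > 0" using t1 Y0(1) by simp
      have "exp (- 2 * pi * Im \<tau> / 24) = exp (- (2 * pi * Im \<tau> / 24))" by simp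
      also have "\<dots> \<le> 1 / (2 * pi * Im \<tau> / 24)" by (rule exp_neg_le[OF pos])
      finally have Eb: "exp (- 2 * pi * Im \<tau> / 24) \<le> 1 / (2 * pi * Im \<tau> / 24)" .
      have "norm (g \<tau>) \<le> K * (1 / (2 * pi * Im \<tau> / 24))"
        using gb[OF t1] Eb K by (meson less_imp_le mult_left_mono order_trans)
      also have "\<dots> < \<epsilon>"
      proof -
        have "12 * K < Im \<tau> * (pi * \<epsilon>)" using t2 eps by (simp add: field_simps)
        thus ?thesis using pos eps by (simp add: field_simps)
      qed
      finally show ?thesis .
    qed
    thus "\<exists>Y. \<forall>\<tau>. Y < Im \<tau> \<longrightarrow> norm (g \<tau>) < \<epsilon>" by blast
  qed
  show ?thesis unfolding eta_cusp_form_def using gh gtr hc vc by blast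
qed

lemma forward:
  fixes r s :: nat
  assumes g: "eta_cusp_form r s g" and r: "r < 24"
  shows "\<exists>f. modular_form s f \<and> (\<forall>\<tau>\<in>uhp. g \<tau> = dedekind_eta \<tau> ^ r * f \<tau>)"
proof -
  have gh: "g holomorphic_on uhp"
    and gtr: "\<And>a b c d \<tau>. a * d - b * c = 1 \<Longrightarrow> \<tau> \<in> uhp \<Longrightarrow>
        g (moebius a b c d \<tau>) = (of_int c * \<tau> + of_int d) ^ s *
            (dedekind_eta (moebius a b c d \<tau>) / dedekind_eta \<tau>) ^ r * g \<tau>"
    and gc: "holomorphic_at_cusp g"
    using g unfolding eta_cusp_form_def by blast+
  define f where "f = (\<lambda>\<tau>. g \<tau> / dedekind_eta \<tau> ^ r)"
  have fh: "f holomorphic_on uhp"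
    unfolding f_def by (intro holomorphic_intros gh eta_holo) (simp add: eta_nz)
  have ftr: "f (moebius a b c d \<tau>) = (of_int c * \<tau> + of_int d) ^ s * f \<tau>"
    if det: "a * d - b * c = 1" and t: "\<tau> \<in> uhp" for a b c d \<tau>
  proof -
    have m: "moebius a b c d \<tau> \<in> uhp" by (rule moebius_uhp[OF det t])
    have nz: "dedekind_eta \<tau> \<noteq> 0" by (rule eta_nz[OF t])
    have nz2: "dedekind_eta (moebius a b c d \<tau>) \<noteq> 0" by (rule eta_nz[OF m])
    show ?thesis unfolding f_def gtr[OF det t]
      using nz nz2 by (simp add: power_divide field_simps)
  qed
  have per: "g (\<tau> + of_int n) = exp (2 * pi * \<i> * of_int n / 24) ^ r * g \<tau>" if t: "\<tau> \<in> uhp" for \<tau> n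
  proof -
    have nz: "dedekind_eta \<tau> \<noteq> 0" by (rule eta_nz[OF t])
    have "g (moebius 1 n 0 1 \<tau>) = (of_int 0 * \<tau> + of_int 1) ^ s *
            (dedekind_eta (moebius 1 n 0 1 \<tau>) / dedekind_eta \<tau>) ^ r * g \<tau>"
      by (rule gtr[OF _ t]) simp
    thus ?thesis using nz by (simp add: moebius_translate eta_plus_int)
  qed
  obtain B Y where BY: "\<And>\<tau>. Im \<tau> > Y \<Longrightarrow> norm (g \<tau> / exp (2 * pi * \<i> * \<tau> / 24) ^ r) \<le> B"
    using cusp_F_bounded[OF gh per gc r] by blast
  obtain Y0 where Y0: "Y0 > 0" "\<And>\<tau>. Im \<tau> > Y0 \<Longrightarrow> 1/2 \<le> norm (Pq (qq \<tau>)) \<and> norm (Pq (qq \<tau>)) \<le> 3/2 \<and> norm (qq \<tau>) < 1"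
    using Pq_bounds_cusp by blast
  have fc: "holomorphic_at_cusp f"
    unfolding holomorphic_at_cusp_def
  proof (intro exI allI impI)
    fix \<tau> :: complex assume t: "Im \<tau> > max Y Y0"
    define F where "F = g \<tau> / exp (2 * pi * \<i> * \<tau> / 24) ^ r"
    have Fb: "norm F \<le> B" using BY[of \<tau>] t by (simp add: F_def)
    have B0: "0 \<le> B" using Fb norm_ge_zero[of F] by linarith
    have P: "1/2 \<le> norm (Pq (qq \<tau>))" using Y0(2)[of \<tau>] t by simp
    have fe: "f \<tau> = F / Pq (qq \<tau>) ^ r"
      by (simp add: f_def F_def eta_eq power_mult_distrib mult_ac)
    have "(1/2) ^ r \<le> norm (Pq (qq \<tau>)) ^ r" by (rule power_mono[OF P]) simp
    moreover have pp: "norm (Pq (qq \<tau>)) ^ r > 0" using P by (intro zero_less_power) linarith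
    ultimately have Pi: "1 / norm (Pq (qq \<tau>)) ^ r \<le> 2 ^ r"
      by (simp add: field_simps power_divide)
    have "norm (f \<tau>) = norm F * (1 / norm (Pq (qq \<tau>)) ^ r)"
      by (simp add: fe norm_divide norm_power)
    also have "\<dots> \<le> B * 2 ^ r"
      by (rule mult_mono[OF Fb Pi]) (use B0 in auto)
    finally show "norm (f \<tau>) \<le> B * 2 ^ r" .
  qed
  have "modular_form s f"
    unfolding modular_form_def using fh ftr fc by blast
  moreover have "\<forall>\<tau>\<in>uhp. g \<tau> = dedekind_eta \<tau> ^ r * f \<tau>"
    using eta_nz by (simp add: f_def)
  ultimately show ?thesis by blast
qed

theorem proposition1:
  fixes r s :: nat
  assumes "coprime r 6" and "0 < r" and "r < 24" and "even s"
  shows "eta_cusp_form r s g \<longleftrightarrow>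
           (\<exists>f. modular_form s f \<and> (\<forall>\<tau>\<in>uhp. g \<tau> = dedekind_eta \<tau> ^ r * f \<tau>))"
  using forward[OF _ assms(3)] backward[OF _ _ assms(2)] by blast

end
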